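(* Let $c>0$, $\alpha>0$ (constant step size), $\zeta\in(0,1)$, and let $M\ge 1$ be an integer number of workers. Consider minimizing $f(w)=\frac12 c w^2$ over $w\in\mathbb{R}$ using noisy gradient samples of the form $\nabla\tilde f(w)=cw-\tilde b w-\tilde h$, where $\tilde b$ and $\tilde h$ are independent random variables with mean $0$ and variances $\beta^2$ and $\sigma^2$ respectively, drawn freshly and independently for every worker and every time step. The $M$ workers start from a common initial point, and the models $w_{1,t},\dots,w_{M,t}$ evolve as follows: at each time step $t$, independently of everything else, with probability $\zeta$ all models are averaged, i.e. $w_{i,t+1}=\frac1M\sum_{j=1}^M w_{j,t}$ for every $i$; otherwise (with probability $1-\zeta$) each worker independently performs the constant-step SGD update $w_{i,t+1}=w_{i,t}-\alpha\nabla\tilde f(w_{i,t})=(1-\alpha c)w_{i,t}+\alpha(\tilde b_{i,t}w_{i,t}+\tilde h_{i,t})$. Then the asymptotic variance of the average of the models is \[ \lim_{t\to\infty}\mathbf{Var}\left(\frac1M\sum_{i=1}^M w_{i,t}\right)=\frac{\alpha\sigma^2}{M}\left(2c-\alpha c^2-\alpha\beta^2\,\frac{1+\eta M^{-1}}{1+\eta}\right)^{-1}, \qquad\text{where } \eta=\frac{\zeta}{(1-\zeta)\,\alpha\,(2c-\alpha c^2)}. \]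
   Context: This is a simple one-dimensional model of parallel SGD with periodic (randomized) model averaging: the expected number of steps between averaging operations is $\zeta^{-1}$. The noise model satisfies the gradient-variance bound $\mathbf{Var}(\nabla\tilde f(w))\le \beta^2 w^2+\sigma^2$, i.e. the variance grows with the distance from the optimum $w^*=0$.
   Formalization: The limit formula is asserted only when alpha c < 2 and the bracket $2c-\alpha c^2-\alpha\beta^2\,\frac{1+\eta M^{-1}}{1+\eta}$ is positive. The statement above fails without it. *)

theory Defs
  imports "HOL-Probability.Probability"
begin

text \<open>Sources of randomness: the averaging coin at time t, and the noise
  variables b_{i,t}, h_{i,t} of worker i at time t.\<close>
datatype src = Coin nat | Bn nat nat | Hn nat nat

definition var :: "'a measure \<Rightarrow> ('a \<Rightarrow> real) \<Rightarrow> real" where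
  "var P Y = integral\<^sup>L P (\<lambda>x. (Y x - integral\<^sup>L P Y)\<^sup>2)"

fun W :: "nat \<Rightarrow> real \<Rightarrow> real \<Rightarrow> real \<Rightarrow> (src \<Rightarrow> 'a \<Rightarrow> real) \<Rightarrow> 'a \<Rightarrow> nat \<Rightarrow> nat \<Rightarrow> real" where
  "W M c \<alpha> w0 X \<omega> 0 = (\<lambda>i. w0)"
| "W M c \<alpha> w0 X \<omega> (Suc t) =
     (let w = W M c \<alpha> w0 X \<omega> t in
      if X (Coin t) \<omega> = 1 then (\<lambda>i. (\<Sum>j<M. w j) / real M)
      else (\<lambda>i. w i - \<alpha> * (c * w i - X (Bn i t) \<omega> * w i - X (Hn i t) \<omega>)))"

definition eta :: "real \<Rightarrow> real \<Rightarrow> real \<Rightarrow> real" where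
  "eta \<zeta> \<alpha> c = \<zeta> / ((1 - \<zeta>) * \<alpha> * (2 * c - \<alpha> * c\<^sup>2))"

definition denom :: "nat \<Rightarrow> real \<Rightarrow> real \<Rightarrow> real \<Rightarrow> real \<Rightarrow> real" where
  "denom M \<zeta> \<alpha> c \<beta> = 2 * c - \<alpha> * c\<^sup>2 - \<alpha> * \<beta>\<^sup>2 * (1 + eta \<zeta> \<alpha> c / real M) / (1 + eta \<zeta> \<alpha> c)"

end

theory Submission
  imports Defs
begin

definition past :: "nat \<Rightarrow> nat \<Rightarrow> src set" where
  "past M t = {Coin s|s. s<t} \<union> {Bn j s|j s. j<M \<and> s<t} \<union> {Hn j s|j s. j<M \<and> s<t}"
definition pres :: "nat \<Rightarrow> nat \<Rightarrow> src set" where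
  "pres M t = {Coin t} \<union> {Bn j t|j. j<M} \<union> {Hn j t|j. j<M}"

definition Wf :: "nat \<Rightarrow> real \<Rightarrow> real \<Rightarrow> real \<Rightarrow> (src \<Rightarrow> real) \<Rightarrow> nat \<Rightarrow> nat \<Rightarrow> real" where
  "Wf M c \<alpha> w0 x t = W M c \<alpha> w0 (\<lambda>s (_::unit). x s) () t"

lemma W_Wf: "W M c \<alpha> w0 X \<omega> t = Wf M c \<alpha> w0 (\<lambda>s. X s \<omega>) t"
  by (induction t) (simp_all add: Wf_def Let_def)

lemma Wf_0: "Wf M c \<alpha> w0 x 0 i = w0" by (simp add: Wf_def)

lemma Wf_Suc: "Wf M c \<alpha> w0 x (Suc t) i = (if x (Coin t) = 1 then (\<Sum>j<M. Wf M c \<alpha> w0 x t j) / real M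
   else Wf M c \<alpha> w0 x t i - \<alpha> * (c * Wf M c \<alpha> w0 x t i - x (Bn i t) * Wf M c \<alpha> w0 x t i - x (Hn i t)))"
  by (simp add: Wf_def Let_def)

lemma past_mono: "past M t \<subseteq> past M (Suc t)" unfolding past_def by auto

lemma Wf_agree: "(\<And>s. s \<in> past M t \<Longrightarrow> x s = y s) \<Longrightarrow> i < M \<Longrightarrow> Wf M c \<alpha> w0 x t i = Wf M c \<alpha> w0 y t i"
proof (induction t arbitrary: i)
  case 0 then show ?case by (simp add: Wf_0)
next
  case (Suc t)
  have IH: "\<And>j. j < M \<Longrightarrow> Wf M c \<alpha> w0 x t j = Wf M c \<alpha> w0 y t j"
    using Suc.IH Suc.prems(1) past_mono by blast
  have "x (Coin t) = y (Coin t)" "x (Bn i t) = y (Bn i t)" "x (Hn i t) = y (Hn i t)"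
    using Suc.prems unfolding past_def by auto
  then show ?case using IH Suc.prems(2) by (simp add: Wf_Suc)
qed

lemma Wf_meas: "past M t \<subseteq> K \<Longrightarrow> i < M \<Longrightarrow> (\<lambda>x. Wf M c \<alpha> w0 x t i) \<in> borel_measurable (PiM K (\<lambda>_. borel::real measure))"
proof (induction t arbitrary: i)
  case 0 then show ?case by (simp add: Wf_0)
next
  case (Suc t)
  have K: "past M t \<subseteq> K" using Suc.prems past_mono by blast
  have IH[measurable]: "\<And>j. j < M \<Longrightarrow> (\<lambda>x. Wf M c \<alpha> w0 x t j) \<in> borel_measurable (PiM K (\<lambda>_. borel::real measure))"
    using Suc.IH K by blast
  have in1: "Coin t \<in> K" "Bn i t \<in> K" "Hn i t \<in> K" using Suc.prems unfolding past_def by auto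
  have m1: "(\<lambda>x. x (Coin t)) \<in> borel_measurable (PiM K (\<lambda>_. borel::real measure))"
    "(\<lambda>x. x (Bn i t)) \<in> borel_measurable (PiM K (\<lambda>_. borel::real measure))"
    "(\<lambda>x. x (Hn i t)) \<in> borel_measurable (PiM K (\<lambda>_. borel::real measure))"
    using in1 by (auto intro: measurable_component_singleton)
  have "(\<lambda>x. (\<Sum>j<M. Wf M c \<alpha> w0 x t j) / real M) \<in> borel_measurable (PiM K (\<lambda>_. borel::real measure))"
    using IH by (intro borel_measurable_divide borel_measurable_sum) auto
  moreover have "{x \<in> space (PiM K (\<lambda>_. borel::real measure)). x (Coin t) = 1} \<in> sets (PiM K (\<lambda>_. borel::real measure))"
  proof -
    have "{x \<in> space (PiM K (\<lambda>_. borel::real measure)). x (Coin t) = 1} = (\<lambda>x. x (Coin t)) -` {1} \<inter> space (PiM K (\<lambda>_. borel::real measure))"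
      by auto
    also have "\<dots> \<in> sets (PiM K (\<lambda>_. borel::real measure))" by (rule measurable_sets[OF m1(1)]) (rule borel_closed, simp)
    finally show ?thesis .
  qed
  moreover have "(\<lambda>x. Wf M c \<alpha> w0 x t i - \<alpha> * (c * Wf M c \<alpha> w0 x t i - x (Bn i t) * Wf M c \<alpha> w0 x t i - x (Hn i t)))
     \<in> borel_measurable (PiM K (\<lambda>_. borel::real measure))"
    using m1 IH[OF Suc.prems(2)] by (intro borel_measurable_diff borel_measurable_times borel_measurable_const) auto
  ultimately show ?case unfolding Wf_Suc
    by (intro measurable_If) auto
qed

definition dep :: "'a measure \<Rightarrow> (src \<Rightarrow> 'a \<Rightarrow> real) \<Rightarrow> src set \<Rightarrow> ('a \<Rightarrow> real) \<Rightarrow> bool" where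
  "dep P X K g \<longleftrightarrow> (\<exists>G \<in> borel_measurable (PiM K (\<lambda>_. borel::real measure)).
      \<forall>\<omega>\<in>space P. g \<omega> = G (restrict (\<lambda>s. X s \<omega>) K))"

lemma dep_X: "s \<in> K \<Longrightarrow> dep P X K (X s)"
  unfolding dep_def by (intro bexI[of _ "\<lambda>x. x s"]) (auto intro: measurable_component_singleton)

lemma dep_const: "dep P X K (\<lambda>_. a)"
  unfolding dep_def by (intro bexI[of _ "\<lambda>x. a"]) auto

lemma dep_fun: "dep P X K g \<Longrightarrow> f \<in> borel_measurable borel \<Longrightarrow> dep P X K (\<lambda>\<omega>. f (g \<omega>))"
proof -
  assume "dep P X K g" and f: "f \<in> borel_measurable borel"
  then obtain G where G: "G \<in> borel_measurable (PiM K (\<lambda>_. borel::real measure))"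
    "\<forall>\<omega>\<in>space P. g \<omega> = G (restrict (\<lambda>s. X s \<omega>) K)" unfolding dep_def by blast
  have "(\<lambda>x. f (G x)) \<in> borel_measurable (PiM K (\<lambda>_. borel::real measure))"
    using measurable_compose[OF G(1) f] by (simp add: comp_def)
  then show ?thesis unfolding dep_def using G(2) by (intro bexI[of _ "\<lambda>x. f (G x)"]) auto
qed

lemma dep_comb:
  assumes "dep P X K g" "dep P X K h"
    and f: "\<And>G H. G \<in> borel_measurable (PiM K (\<lambda>_. borel::real measure)) \<Longrightarrow>
       H \<in> borel_measurable (PiM K (\<lambda>_. borel::real measure)) \<Longrightarrow>
       (\<lambda>x. f (G x) (H x)) \<in> borel_measurable (PiM K (\<lambda>_. borel::real measure))"
  shows "dep P X K (\<lambda>\<omega>. f (g \<omega>) (h \<omega>))"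
proof -
  obtain G H where G: "G \<in> borel_measurable (PiM K (\<lambda>_. borel::real measure))"
    "\<forall>\<omega>\<in>space P. g \<omega> = G (restrict (\<lambda>s. X s \<omega>) K)"
    and H: "H \<in> borel_measurable (PiM K (\<lambda>_. borel::real measure))"
    "\<forall>\<omega>\<in>space P. h \<omega> = H (restrict (\<lambda>s. X s \<omega>) K)"
    using assms(1,2) unfolding dep_def by blast
  show ?thesis unfolding dep_def using G H f[OF G(1) H(1)] by (intro bexI[of _ "\<lambda>x. f (G x) (H x)"]) auto
qed

lemma dep_add: "dep P X K g \<Longrightarrow> dep P X K h \<Longrightarrow> dep P X K (\<lambda>\<omega>. g \<omega> + h \<omega>)"
  by (rule dep_comb[where f="(+)"]) (auto intro: borel_measurable_add)
lemma dep_mult: "dep P X K g \<Longrightarrow> dep P X K h \<Longrightarrow> dep P X K (\<lambda>\<omega>. g \<omega> * h \<omega>)"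
  by (rule dep_comb[where f="(*)"]) (auto intro: borel_measurable_times)
lemma dep_diff: "dep P X K g \<Longrightarrow> dep P X K h \<Longrightarrow> dep P X K (\<lambda>\<omega>. g \<omega> - h \<omega>)"
  by (rule dep_comb[where f="(-)"]) (auto intro: borel_measurable_diff)

lemma dep_sum: "finite A \<Longrightarrow> (\<And>j. j \<in> A \<Longrightarrow> dep P X K (g j)) \<Longrightarrow> dep P X K (\<lambda>\<omega>. \<Sum>j\<in>A. g j \<omega>)"
proof (induction A rule: finite_induct)
  case empty then show ?case using dep_const[of P X K 0] by simp
next
  case (insert x F) then show ?case by (simp add: dep_add)
qed

lemma dep_mono: "K1 \<subseteq> K2 \<Longrightarrow> dep P X K1 g \<Longrightarrow> dep P X K2 g"
proof -
  assume K: "K1 \<subseteq> K2" "dep P X K1 g"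
  then obtain G where G: "G \<in> borel_measurable (PiM K1 (\<lambda>_. borel::real measure))"
    "\<forall>\<omega>\<in>space P. g \<omega> = G (restrict (\<lambda>s. X s \<omega>) K1)" unfolding dep_def by blast
  have "(\<lambda>x. G (restrict x K1)) \<in> borel_measurable (PiM K2 (\<lambda>_. borel::real measure))"
    using measurable_compose[OF measurable_restrict_subset[OF K(1)] G(1)] by simp
  moreover have "\<forall>\<omega>\<in>space P. g \<omega> = G (restrict (restrict (\<lambda>s. X s \<omega>) K2) K1)"
    using G(2) K(1) by (auto simp: restrict_def intro!: arg_cong[where f=G] ext)
  ultimately show ?thesis unfolding dep_def by (intro bexI[of _ "\<lambda>x. G (restrict x K1)"]) auto
qed

lemma dep_W: "i < M \<Longrightarrow> dep P X (past M t) (\<lambda>\<omega>. W M c \<alpha> w0 X \<omega> t i)"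
  unfolding dep_def
  by (intro bexI[of _ "\<lambda>x. Wf M c \<alpha> w0 x t i"] ballI)
     (auto simp: W_Wf intro!: Wf_agree Wf_meas)

context
  fixes P :: "'a measure" and X :: "src \<Rightarrow> 'a \<Rightarrow> real" and I :: "src set"
  assumes ps: "prob_space P" and ind: "prob_space.indep_vars P (\<lambda>_. borel) X I"
begin

interpretation prob_space P by (rule ps)

lemma rvX: "s \<in> I \<Longrightarrow> X s \<in> borel_measurable P"
  using ind unfolding indep_vars_def by auto

lemma dep_meas: "K \<subseteq> I \<Longrightarrow> dep P X K g \<Longrightarrow> g \<in> borel_measurable P"
proof -
  assume K: "K \<subseteq> I" "dep P X K g"
  then obtain G where G: "G \<in> borel_measurable (PiM K (\<lambda>_. borel::real measure))"
    "\<forall>\<omega>\<in>space P. g \<omega> = G (restrict (\<lambda>s. X s \<omega>) K)" unfolding dep_def by blast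
  have "(\<lambda>\<omega>. restrict (\<lambda>s. X s \<omega>) K) \<in> measurable P (PiM K (\<lambda>_. borel::real measure))"
    using K(1) rvX by (intro measurable_restrict) auto
  from measurable_compose[OF this G(1)] have "(\<lambda>\<omega>. G (restrict (\<lambda>s. X s \<omega>) K)) \<in> borel_measurable P" .
  then show ?thesis using G(2) by (subst measurable_cong[where g="\<lambda>\<omega>. G (restrict (\<lambda>s. X s \<omega>) K)"]) auto
qed

lemma dep_indep:
  assumes K: "K1 \<subseteq> I" "K2 \<subseteq> I" "K1 \<inter> K2 = {}"
    and g: "dep P X K1 g" and h: "dep P X K2 h" and ig: "integrable P g" and ih: "integrable P h"
  shows "integrable P (\<lambda>\<omega>. g \<omega> * h \<omega>) \<and> expectation (\<lambda>\<omega>. g \<omega> * h \<omega>) = expectation g * expectation h"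
proof -
  obtain G where G: "G \<in> borel_measurable (PiM K1 (\<lambda>_. borel::real measure))"
    "\<forall>\<omega>\<in>space P. g \<omega> = G (restrict (\<lambda>s. X s \<omega>) K1)" using g unfolding dep_def by blast
  obtain H where H: "H \<in> borel_measurable (PiM K2 (\<lambda>_. borel::real measure))"
    "\<forall>\<omega>\<in>space P. h \<omega> = H (restrict (\<lambda>s. X s \<omega>) K2)" using h unfolding dep_def by blast
  define KK where "KK = (\<lambda>b. if b then K1 else K2)"
  have A: "indep_vars (\<lambda>j. PiM (KK j) (\<lambda>_. borel)) (\<lambda>j \<omega>. restrict (\<lambda>i. X i \<omega>) (KK j)) UNIV"
    by (rule indep_vars_restrict[OF ind]) (use K in \<open>auto simp: KK_def disjoint_family_on_def\<close>)
  have ee1: "(\<lambda>j. PiM (KK j) (\<lambda>_. borel)) = case_bool (PiM K1 (\<lambda>_. borel)) (PiM K2 (\<lambda>_. borel))"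
    by (rule ext) (simp add: KK_def split: bool.split)
  have ee2: "(\<lambda>j \<omega>. restrict (\<lambda>i. X i \<omega>) (KK j)) = case_bool (\<lambda>\<omega>. restrict (\<lambda>i. X i \<omega>) K1) (\<lambda>\<omega>. restrict (\<lambda>i. X i \<omega>) K2)"
    by (rule ext) (simp add: KK_def split: bool.split)
  have "indep_var (PiM K1 (\<lambda>_. borel)) (\<lambda>\<omega>. restrict (\<lambda>i. X i \<omega>) K1) (PiM K2 (\<lambda>_. borel)) (\<lambda>\<omega>. restrict (\<lambda>i. X i \<omega>) K2)"
    unfolding indep_var_def using A unfolding ee1 ee2 .
  from indep_var_compose[OF this G(1) H(1)]
  have iv: "indep_var borel (\<lambda>\<omega>. G (restrict (\<lambda>s. X s \<omega>) K1)) borel (\<lambda>\<omega>. H (restrict (\<lambda>s. X s \<omega>) K2))"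
    by (simp add: comp_def)
  have e1: "expectation f1 = expectation f2" if "\<And>\<omega>. \<omega> \<in> space P \<Longrightarrow> f1 \<omega> = f2 \<omega>" for f1 f2 :: "'a \<Rightarrow> real"
    using Bochner_Integration.integral_cong[of P P f1 f2] that by simp
  have i1: "integrable P f1 = integrable P f2" if "\<And>\<omega>. \<omega> \<in> space P \<Longrightarrow> f1 \<omega> = f2 \<omega>" for f1 f2 :: "'a \<Rightarrow> real"
    using Bochner_Integration.integrable_cong[of P P f1 f2] that by simp
  have ig': "integrable P (\<lambda>\<omega>. G (restrict (\<lambda>s. X s \<omega>) K1))"
    using ig G(2) i1[of g "\<lambda>\<omega>. G (restrict (\<lambda>s. X s \<omega>) K1)"] by auto
  have ih': "integrable P (\<lambda>\<omega>. H (restrict (\<lambda>s. X s \<omega>) K2))"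
    using ih H(2) i1[of h "\<lambda>\<omega>. H (restrict (\<lambda>s. X s \<omega>) K2)"] by auto
  have q1: "expectation g = expectation (\<lambda>\<omega>. G (restrict (\<lambda>s. X s \<omega>) K1))"
    using G(2) by (intro e1) auto
  have q2: "expectation h = expectation (\<lambda>\<omega>. H (restrict (\<lambda>s. X s \<omega>) K2))"
    using H(2) by (intro e1) auto
  have q3: "expectation (\<lambda>\<omega>. g \<omega> * h \<omega>) = expectation (\<lambda>\<omega>. G (restrict (\<lambda>s. X s \<omega>) K1) * H (restrict (\<lambda>s. X s \<omega>) K2))"
    using G(2) H(2) by (intro e1) auto
  have q4: "integrable P (\<lambda>\<omega>. g \<omega> * h \<omega>) = integrable P (\<lambda>\<omega>. G (restrict (\<lambda>s. X s \<omega>) K1) * H (restrict (\<lambda>s. X s \<omega>) K2))"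
    using G(2) H(2) by (intro i1) auto
  show ?thesis unfolding q1 q2 q3 q4
    using indep_var_integrable[OF iv ig' ih'] indep_var_lebesgue_integral[OF iv ig' ih'] by (intro conjI)
qed

end

definition Ind :: "nat \<Rightarrow> src set" where
  "Ind M = {Coin t | t. True} \<union> {Bn i t | i t. i < M} \<union> {Hn i t | i t. i < M}"
definition noise :: "nat \<Rightarrow> nat \<Rightarrow> src set" where
  "noise M t = {Bn j t|j. j<M} \<union> {Hn j t|j. j<M}"

lemma var_alt:
  assumes ps: "prob_space P" and i1: "integrable P Y" and i2: "integrable P (\<lambda>\<omega>. Y \<omega> * Y \<omega>)"
  shows "var P Y = integral\<^sup>L P (\<lambda>\<omega>. Y \<omega> * Y \<omega>) - (integral\<^sup>L P Y)\<^sup>2"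
proof -
  interpret prob_space P by (rule ps)
  define m where "m = integral\<^sup>L P Y"
  have "(\<lambda>x. (Y x - m)\<^sup>2) = (\<lambda>x. Y x * Y x - (2 * m * Y x - m\<^sup>2))"
    by (rule ext) (simp add: power2_eq_square algebra_simps)
  then have "var P Y = integral\<^sup>L P (\<lambda>x. Y x * Y x - (2 * m * Y x - m\<^sup>2))"
    by (simp add: var_def m_def)
  also have "\<dots> = integral\<^sup>L P (\<lambda>\<omega>. Y \<omega> * Y \<omega>) - (2 * m * m - m\<^sup>2)"
    using i1 i2 by (simp add: m_def prob_space.prob_space[OF ps])
  finally show ?thesis by (simp add: m_def power2_eq_square)
qed

locale sgd =
  fixes P :: "'a measure" and X :: "src \<Rightarrow> 'a \<Rightarrow> real" and c \<alpha> \<zeta> \<beta> \<sigma> w0 :: real and M :: nat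
  assumes ps: "prob_space P" and Mpos: "M \<ge> 1"
    and ind: "prob_space.indep_vars P (\<lambda>_. borel) X (Ind M)"
    and coin: "\<And>t. measure P {\<omega> \<in> space P. X (Coin t) \<omega> = 1} = \<zeta>"
    and bb: "\<And>i t. i < M \<Longrightarrow> integrable P (X (Bn i t)) \<and> integrable P (\<lambda>\<omega>. (X (Bn i t) \<omega>)\<^sup>2)
              \<and> integral\<^sup>L P (X (Bn i t)) = 0 \<and> var P (X (Bn i t)) = \<beta>\<^sup>2"
    and hh: "\<And>i t. i < M \<Longrightarrow> integrable P (X (Hn i t)) \<and> integrable P (\<lambda>\<omega>. (X (Hn i t) \<omega>)\<^sup>2)
              \<and> integral\<^sup>L P (X (Hn i t)) = 0 \<and> var P (X (Hn i t)) = \<sigma>\<^sup>2"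
begin

interpretation prob_space P by (rule ps)

lemma ps1[simp]: "measure P (space P) = 1" using ps by (simp add: prob_space.prob_space)

lemma sq_exp: "integrable P (\<lambda>\<omega>. (Y \<omega>)\<^sup>2) \<Longrightarrow> integral\<^sup>L P Y = 0 \<Longrightarrow>
   integral\<^sup>L P (\<lambda>\<omega>. Y \<omega> * Y \<omega>) = var P Y"
  by (simp add: var_def power2_eq_square)

lemma BB: "i < M \<Longrightarrow> j < M \<Longrightarrow> integrable P (\<lambda>\<omega>. X (Bn i t) \<omega> * X (Bn j t) \<omega>) \<and>
    expectation (\<lambda>\<omega>. X (Bn i t) \<omega> * X (Bn j t) \<omega>) = (if i = j then \<beta>\<^sup>2 else 0)"
proof (cases "i = j")
  case True
  assume "i < M" "j < M"
  then show ?thesis using True bb[of i t] sq_exp[of "X (Bn i t)"] by (simp add: power2_eq_square)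
next
  case False
  assume "i < M" "j < M"
  then have "integrable P (\<lambda>\<omega>. X (Bn i t) \<omega> * X (Bn j t) \<omega>) \<and>
    expectation (\<lambda>\<omega>. X (Bn i t) \<omega> * X (Bn j t) \<omega>) = expectation (X (Bn i t)) * expectation (X (Bn j t))"
    using False bb[of i t] bb[of j t]
    by (intro dep_indep[OF ps ind, of "{Bn i t}" "{Bn j t}"] dep_X) (auto simp: Ind_def)
  then show ?thesis using False bb[of i t] \<open>i < M\<close> by simp
qed

lemma HH: "i < M \<Longrightarrow> j < M \<Longrightarrow> integrable P (\<lambda>\<omega>. X (Hn i t) \<omega> * X (Hn j t) \<omega>) \<and>
    expectation (\<lambda>\<omega>. X (Hn i t) \<omega> * X (Hn j t) \<omega>) = (if i = j then \<sigma>\<^sup>2 else 0)"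
proof (cases "i = j")
  case True
  assume "i < M" "j < M"
  then show ?thesis using True hh[of i t] sq_exp[of "X (Hn i t)"] by (simp add: power2_eq_square)
next
  case False
  assume "i < M" "j < M"
  then have "integrable P (\<lambda>\<omega>. X (Hn i t) \<omega> * X (Hn j t) \<omega>) \<and>
    expectation (\<lambda>\<omega>. X (Hn i t) \<omega> * X (Hn j t) \<omega>) = expectation (X (Hn i t)) * expectation (X (Hn j t))"
    using False hh[of i t] hh[of j t]
    by (intro dep_indep[OF ps ind, of "{Hn i t}" "{Hn j t}"] dep_X) (auto simp: Ind_def)
  then show ?thesis using False hh[of i t] \<open>i < M\<close> by simp
qed

lemma BH: "i < M \<Longrightarrow> j < M \<Longrightarrow> integrable P (\<lambda>\<omega>. X (Bn i t) \<omega> * X (Hn j t) \<omega>) \<and>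
    expectation (\<lambda>\<omega>. X (Bn i t) \<omega> * X (Hn j t) \<omega>) = 0"
proof -
  assume "i < M" "j < M"
  then have "integrable P (\<lambda>\<omega>. X (Bn i t) \<omega> * X (Hn j t) \<omega>) \<and>
    expectation (\<lambda>\<omega>. X (Bn i t) \<omega> * X (Hn j t) \<omega>) = expectation (X (Bn i t)) * expectation (X (Hn j t))"
    using bb[of i t] hh[of j t]
    by (intro dep_indep[OF ps ind, of "{Bn i t}" "{Hn j t}"] dep_X) (auto simp: Ind_def)
  then show ?thesis using bb[of i t] \<open>i < M\<close> by simp
qed

definition p :: "nat \<Rightarrow> nat \<Rightarrow> 'a \<Rightarrow> real" where
  "p t i \<omega> = 1 - \<alpha> * c + \<alpha> * X (Bn i t) \<omega>"

lemma N1: "i < M \<Longrightarrow> integrable P (p t i) \<and> expectation (p t i) = 1 - \<alpha> * c"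
  using bb[of i t] unfolding p_def by simp

lemma N2: "i < M \<Longrightarrow> j < M \<Longrightarrow> integrable P (\<lambda>\<omega>. p t i \<omega> * p t j \<omega>) \<and>
   expectation (\<lambda>\<omega>. p t i \<omega> * p t j \<omega>) = (1 - \<alpha> * c)\<^sup>2 + \<alpha>\<^sup>2 * (if i = j then \<beta>\<^sup>2 else 0)"
proof -
  assume ij: "i < M" "j < M"
  have e: "(\<lambda>\<omega>. p t i \<omega> * p t j \<omega>) = (\<lambda>\<omega>. (1 - \<alpha> * c)\<^sup>2 + ((1 - \<alpha> * c) * \<alpha> * X (Bn j t) \<omega> +
      ((1 - \<alpha> * c) * \<alpha> * X (Bn i t) \<omega> + \<alpha>\<^sup>2 * (X (Bn i t) \<omega> * X (Bn j t) \<omega>))))"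
    by (rule ext) (simp add: p_def power2_eq_square algebra_simps)
  show ?thesis unfolding e using bb[of i t] bb[of j t] BB[OF ij, of t] ij by simp
qed

lemma N3: "i < M \<Longrightarrow> j < M \<Longrightarrow> integrable P (\<lambda>\<omega>. p t i \<omega> * X (Hn j t) \<omega>) \<and>
   expectation (\<lambda>\<omega>. p t i \<omega> * X (Hn j t) \<omega>) = 0"
proof -
  assume ij: "i < M" "j < M"
  have e: "(\<lambda>\<omega>. p t i \<omega> * X (Hn j t) \<omega>) = (\<lambda>\<omega>. (1 - \<alpha> * c) * X (Hn j t) \<omega> + \<alpha> * (X (Bn i t) \<omega> * X (Hn j t) \<omega>))"
    by (rule ext) (simp add: p_def algebra_simps)
  show ?thesis unfolding e using hh[of j t] BH[OF ij, of t] ij by simp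
qed

end

fun ABs :: "nat \<Rightarrow> real \<Rightarrow> real \<Rightarrow> real \<Rightarrow> real \<Rightarrow> real \<Rightarrow> real \<Rightarrow> nat \<Rightarrow> real \<times> real" where
  "ABs M \<zeta> \<alpha> c \<beta> \<sigma> w0 0 = (w0\<^sup>2, w0\<^sup>2)"
| "ABs M \<zeta> \<alpha> c \<beta> \<sigma> w0 (Suc t) = (let a = fst (ABs M \<zeta> \<alpha> c \<beta> \<sigma> w0 t); b = snd (ABs M \<zeta> \<alpha> c \<beta> \<sigma> w0 t);
      s = (a + (real M - 1) * b) / real M in
     (\<zeta> * s + (1 - \<zeta>) * (((1 - \<alpha> * c)\<^sup>2 + \<alpha>\<^sup>2 * \<beta>\<^sup>2) * a + \<alpha>\<^sup>2 * \<sigma>\<^sup>2), \<zeta> * s + (1 - \<zeta>) * (1 - \<alpha> * c)\<^sup>2 * b))"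

lemma sum_if_AB: "i < (M::nat) \<Longrightarrow> (\<Sum>j<M. if i = j then A else B) = A + (real M - 1) * (B::real)"
proof -
  assume i: "i < M"
  have "(\<Sum>j<M. if i = j then A else B) = (\<Sum>j<M. B + (if i = j then A - B else 0))"
    by (rule sum.cong) auto
  also have "\<dots> = real M * B + (A - B)" using i by (simp add: sum.distrib)
  finally show ?thesis by (simp add: algebra_simps)
qed

context sgd
begin

interpretation prob_space P by (rule ps)

definition ww where "ww t i \<omega> = W M c \<alpha> w0 X \<omega> t i"
definition mean where "mean t \<omega> = (\<Sum>j<M. ww t j \<omega>) / real M"
definition Cf :: "nat \<Rightarrow> 'a \<Rightarrow> real" where "Cf t \<omega> = indicator {1::real} (X (Coin t) \<omega>)"
definition Phi where "Phi t i \<omega> = p t i \<omega> * ww t i \<omega> + \<alpha> * X (Hn i t) \<omega>"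

lemma step1: "ww (Suc t) i \<omega> = Cf t \<omega> * mean t \<omega> + (1 - Cf t \<omega>) * Phi t i \<omega>"
  by (cases "X (Coin t) \<omega> = 1") (simp_all add: ww_def mean_def Cf_def Phi_def p_def Let_def algebra_simps)

lemma step2: "ww (Suc t) i \<omega> * ww (Suc t) j \<omega> =
   Cf t \<omega> * (mean t \<omega> * mean t \<omega>) + (1 - Cf t \<omega>) * (Phi t i \<omega> * Phi t j \<omega>)"
  by (cases "X (Coin t) \<omega> = 1") (simp_all add: step1 Cf_def)

lemma sets1a: "past M t \<subseteq> Ind M" unfolding past_def Ind_def by blast
lemma sets1b: "noise M t \<subseteq> Ind M" unfolding noise_def Ind_def by blast
lemma sets1c: "past M t \<inter> noise M t = {}" unfolding past_def noise_def by auto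
lemma sets1d: "{Coin t} \<subseteq> Ind M" unfolding Ind_def by blast
lemma sets1e: "{Coin t} \<inter> (past M t \<union> noise M t) = {}" unfolding past_def noise_def by auto
lemma sets1f: "past M t \<union> noise M t \<subseteq> Ind M" using sets1a sets1b by blast
lemmas sets1 = sets1a sets1b sets1c sets1d sets1e sets1f

lemma ww_eq: "ww t i = (\<lambda>\<omega>. W M c \<alpha> w0 X \<omega> t i)"
  by (rule ext) (simp add: ww_def)

lemma d_w: "i < M \<Longrightarrow> dep P X (past M t) (ww t i)"
  unfolding ww_eq by (rule dep_W)

lemma d_mean: "dep P X (past M t) (mean t)"
proof -
  have "dep P X (past M t) (\<lambda>\<omega>. \<Sum>j<M. ww t j \<omega>)"
    by (rule dep_sum) (auto intro: d_w)
  then have "dep P X (past M t) (\<lambda>\<omega>. (\<lambda>x. x / real M) (\<Sum>j<M. ww t j \<omega>))"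
    by (rule dep_fun) simp
  moreover have "mean t = (\<lambda>\<omega>. (\<lambda>x. x / real M) (\<Sum>j<M. ww t j \<omega>))"
    by (rule ext) (simp add: mean_def)
  ultimately show ?thesis by simp
qed

lemma d_p: "i < M \<Longrightarrow> dep P X (noise M t) (p t i)"
proof -
  assume i: "i < M"
  have "dep P X (noise M t) (\<lambda>\<omega>. (1 - \<alpha> * c) + \<alpha> * X (Bn i t) \<omega>)"
  proof (rule dep_add[where g="\<lambda>_. 1 - \<alpha> * c"])
    show "dep P X (noise M t) (\<lambda>_. 1 - \<alpha> * c)" by (rule dep_const)
    show "dep P X (noise M t) (\<lambda>\<omega>. \<alpha> * X (Bn i t) \<omega>)"
      by (rule dep_mult[where g="\<lambda>_. \<alpha>"], rule dep_const, rule dep_X) (use i in \<open>auto simp: noise_def\<close>)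
  qed
  moreover have "p t i = (\<lambda>\<omega>. (1 - \<alpha> * c) + \<alpha> * X (Bn i t) \<omega>)" by (rule ext) (simp add: p_def)
  ultimately show ?thesis by simp
qed

lemma d_h: "i < M \<Longrightarrow> dep P X (noise M t) (X (Hn i t))"
  by (intro dep_X) (auto simp: noise_def)

lemma d_Cf: "dep P X {Coin t} (Cf t)"
proof -
  have "dep P X {Coin t} (\<lambda>\<omega>. indicator {1::real} (X (Coin t) \<omega>))"
    by (rule dep_fun[where f="indicator {1::real}"], rule dep_X) auto
  moreover have "Cf t = (\<lambda>\<omega>. indicator {1::real} (X (Coin t) \<omega>))" by (rule ext) (simp add: Cf_def)
  ultimately show ?thesis by simp
qed

lemma Cf_int: "integrable P (Cf t) \<and> expectation (Cf t) = \<zeta>"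
proof -
  define A where "A = {\<omega> \<in> space P. X (Coin t) \<omega> = 1}"
  have rv: "X (Coin t) \<in> borel_measurable P" using rvX[OF ps ind, of "Coin t"] by (simp add: Ind_def)
  have "A = X (Coin t) -` {1} \<inter> space P" unfolding A_def by auto
  also have "\<dots> \<in> sets P" by (rule measurable_sets[OF rv]) (rule borel_closed, simp)
  finally have A: "A \<in> sets P" .
  have eqA: "{\<omega>. X (Coin t) \<omega> = 1} \<inter> space P = A" unfolding A_def by auto
  have CA: "Cf t = indicator {\<omega>. X (Coin t) \<omega> = 1}" unfolding Cf_def by (rule ext) (simp add: indicator_def)
  have "integrable P (indicator {\<omega>. X (Coin t) \<omega> = 1} :: 'a \<Rightarrow> real)"
    by (subst integrable_indicator_iff) (simp add: eqA A less_top[symmetric])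
  moreover have "expectation (indicator {\<omega>. X (Coin t) \<omega> = 1} :: 'a \<Rightarrow> real) = \<zeta>"
    using coin[of t] by (simp add: eqA A_def)
  ultimately show ?thesis unfolding CA by simp
qed

end

context sgd begin

interpretation prob_space P by (rule ps)

lemma indep_mult: "K1 \<subseteq> Ind M \<Longrightarrow> K2 \<subseteq> Ind M \<Longrightarrow> K1 \<inter> K2 = {} \<Longrightarrow> dep P X K1 g \<Longrightarrow> dep P X K2 h \<Longrightarrow>
  integrable P g \<Longrightarrow> integrable P h \<Longrightarrow>
  integrable P (\<lambda>\<omega>. g \<omega> * h \<omega>) \<and> expectation (\<lambda>\<omega>. g \<omega> * h \<omega>) = expectation g * expectation h"
  by (rule dep_indep[OF ps ind])

definition rho where "rho = \<zeta> + (1 - \<zeta>) * (1 - \<alpha> * c)"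
definition mm where "mm t = rho ^ t * w0"

lemma sets2: "noise M t \<inter> past M t = {}" using sets1c by blast

lemma d_Phi: "i < M \<Longrightarrow> dep P X (past M t \<union> noise M t) (Phi t i)"
proof -
  assume i: "i < M"
  have s1: "past M t \<subseteq> past M t \<union> noise M t" "noise M t \<subseteq> past M t \<union> noise M t" by auto
  have "dep P X (past M t \<union> noise M t) (\<lambda>\<omega>. p t i \<omega> * ww t i \<omega> + (\<lambda>_. \<alpha>) \<omega> * X (Hn i t) \<omega>)"
    by (rule dep_add[OF dep_mult[OF dep_mono[OF s1(2) d_p[OF i]] dep_mono[OF s1(1) d_w[OF i]]]
                        dep_mult[OF dep_const dep_mono[OF s1(2) d_h[OF i]]]])
  moreover have "Phi t i = (\<lambda>\<omega>. p t i \<omega> * ww t i \<omega> + (\<lambda>_. \<alpha>) \<omega> * X (Hn i t) \<omega>)"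
    by (rule ext) (simp add: Phi_def)
  ultimately show ?thesis by simp
qed

lemma d_Nf: "dep P X {Coin t} (\<lambda>\<omega>. 1 - Cf t \<omega>)"
  by (rule dep_diff[OF dep_const d_Cf])

lemma Nf_int: "integrable P (\<lambda>\<omega>. 1 - Cf t \<omega>) \<and> expectation (\<lambda>\<omega>. 1 - Cf t \<omega>) = 1 - \<zeta>"
  using Cf_int[of t] by simp

lemma mean_eq: "mean t = (\<lambda>\<omega>. (\<Sum>j<M. ww t j \<omega>) / real M)"
  by (rule ext) (simp add: mean_def)

lemma mean2_eq: "(\<lambda>\<omega>. mean t \<omega> * mean t \<omega>) = (\<lambda>\<omega>. (\<Sum>i<M. \<Sum>j<M. ww t i \<omega> * ww t j \<omega>) / (real M * real M))"
  by (rule ext) (simp add: mean_def sum_product)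

lemma moments: "(\<forall>i<M. integrable P (ww t i) \<and> expectation (ww t i) = mm t) \<and>
  (\<forall>i<M. \<forall>j<M. integrable P (\<lambda>\<omega>. ww t i \<omega> * ww t j \<omega>) \<and>
     expectation (\<lambda>\<omega>. ww t i \<omega> * ww t j \<omega>) =
       (if i = j then fst (ABs M \<zeta> \<alpha> c \<beta> \<sigma> w0 t) else snd (ABs M \<zeta> \<alpha> c \<beta> \<sigma> w0 t)))"
proof (induction t)
  case 0
  have "ww 0 i = (\<lambda>_. w0)" for i by (rule ext) (simp add: ww_def)
  then show ?case by (simp add: mm_def power2_eq_square)
next
  case (Suc t)
  define A where "A = fst (ABs M \<zeta> \<alpha> c \<beta> \<sigma> w0 t)"
  define B where "B = snd (ABs M \<zeta> \<alpha> c \<beta> \<sigma> w0 t)"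
  define S where "S = (A + (real M - 1) * B) / real M"
  have I1: "integrable P (ww t i)" "expectation (ww t i) = mm t" if "i < M" for i
    using Suc.IH that by auto
  have I2: "integrable P (\<lambda>\<omega>. ww t i \<omega> * ww t j \<omega>)"
     "expectation (\<lambda>\<omega>. ww t i \<omega> * ww t j \<omega>) = (if i = j then A else B)" if "i < M" "j < M" for i j
    using Suc.IH that unfolding A_def B_def by auto
  have Mp: "real M > 0" using Mpos by simp
  have mI: "integrable P (mean t)" unfolding mean_eq
    by (intro integrable_divide_zero Bochner_Integration.integrable_sum) (auto intro: I1)
  have mE: "expectation (mean t) = mm t"
  proof -
    have "expectation (mean t) = (\<Sum>j<M. expectation (ww t j)) / real M"
      unfolding mean_eq by (simp add: Bochner_Integration.integral_sum I1)
    also have "\<dots> = mm t" using Mp by (simp add: I1)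
    finally show ?thesis .
  qed
  have ss: "integrable P (\<lambda>x. \<Sum>i<M. \<Sum>j<M. ww t i x * ww t j x)"
    by (rule Bochner_Integration.integrable_sum, rule Bochner_Integration.integrable_sum, rule I2) auto
  have m2I: "integrable P (\<lambda>\<omega>. mean t \<omega> * mean t \<omega>)" unfolding mean2_eq
    using ss by simp
  have m2E: "expectation (\<lambda>\<omega>. mean t \<omega> * mean t \<omega>) = S"
  proof -
    have inner: "expectation (\<lambda>\<omega>. \<Sum>j<M. ww t i \<omega> * ww t j \<omega>) = (\<Sum>j<M. expectation (\<lambda>\<omega>. ww t i \<omega> * ww t j \<omega>))"
      if "i < M" for i by (rule Bochner_Integration.integral_sum) (use I2 that in auto)
    have outer: "expectation (\<lambda>\<omega>. \<Sum>i<M. \<Sum>j<M. ww t i \<omega> * ww t j \<omega>) = (\<Sum>i<M. expectation (\<lambda>\<omega>. \<Sum>j<M. ww t i \<omega> * ww t j \<omega>))"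
      by (rule Bochner_Integration.integral_sum) (rule Bochner_Integration.integrable_sum, auto intro: I2)
    have "expectation (\<lambda>\<omega>. mean t \<omega> * mean t \<omega>) =
        (\<Sum>i<M. \<Sum>j<M. expectation (\<lambda>\<omega>. ww t i \<omega> * ww t j \<omega>)) / (real M * real M)"
      unfolding mean2_eq integral_divide_zero outer using inner by simp
    also have "\<dots> = (\<Sum>i<M. \<Sum>j<M. if i = j then A else B) / (real M * real M)"
      by (simp add: I2)
    also have "\<dots> = (\<Sum>i<M. A + (real M - 1) * B) / (real M * real M)"
      by (simp add: sum_if_AB)
    also have "\<dots> = S" using Mp by (simp add: S_def)
    finally show ?thesis .
  qed
  have PhiI: "integrable P (Phi t i)" "expectation (Phi t i) = (1 - \<alpha> * c) * mm t" if i: "i < M" for i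
  proof -
    have pw: "integrable P (\<lambda>\<omega>. p t i \<omega> * ww t i \<omega>) \<and>
        expectation (\<lambda>\<omega>. p t i \<omega> * ww t i \<omega>) = expectation (p t i) * expectation (ww t i)"
      using N1[OF i, of t] I1[OF i] by (intro indep_mult[OF sets1b sets1a sets2 d_p[OF i] d_w[OF i]]) auto
    have e: "Phi t i = (\<lambda>\<omega>. p t i \<omega> * ww t i \<omega> + \<alpha> * X (Hn i t) \<omega>)"
      by (rule ext) (simp add: Phi_def)
    show "integrable P (Phi t i)" unfolding e using pw hh[OF i, of t] by simp
    show "expectation (Phi t i) = (1 - \<alpha> * c) * mm t" unfolding e using pw hh[OF i, of t] N1[OF i, of t] I1[OF i]
      by simp
  qed
  have PPI: "integrable P (\<lambda>\<omega>. Phi t i \<omega> * Phi t j \<omega>)"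
     "expectation (\<lambda>\<omega>. Phi t i \<omega> * Phi t j \<omega>) =
        ((1 - \<alpha> * c)\<^sup>2 + \<alpha>\<^sup>2 * (if i = j then \<beta>\<^sup>2 else 0)) * (if i = j then A else B) + \<alpha>\<^sup>2 * (if i = j then \<sigma>\<^sup>2 else 0)"
    if i: "i < M" and j: "j < M" for i j
  proof -
    have t1: "integrable P (\<lambda>\<omega>. (p t i \<omega> * p t j \<omega>) * (ww t i \<omega> * ww t j \<omega>)) \<and>
        expectation (\<lambda>\<omega>. (p t i \<omega> * p t j \<omega>) * (ww t i \<omega> * ww t j \<omega>)) =
        expectation (\<lambda>\<omega>. p t i \<omega> * p t j \<omega>) * expectation (\<lambda>\<omega>. ww t i \<omega> * ww t j \<omega>)"
      using N2[OF i j, of t] I2[OF i j]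
      by (intro indep_mult[OF sets1b sets1a sets2 dep_mult[OF d_p[OF i] d_p[OF j]] dep_mult[OF d_w[OF i] d_w[OF j]]]) auto
    have t2: "integrable P (\<lambda>\<omega>. (p t i \<omega> * X (Hn j t) \<omega>) * ww t i \<omega>) \<and>
        expectation (\<lambda>\<omega>. (p t i \<omega> * X (Hn j t) \<omega>) * ww t i \<omega>) =
        expectation (\<lambda>\<omega>. p t i \<omega> * X (Hn j t) \<omega>) * expectation (ww t i)"
      using N3[OF i j, of t] I1[OF i]
      by (intro indep_mult[OF sets1b sets1a sets2 dep_mult[OF d_p[OF i] d_h[OF j]] d_w[OF i]]) auto
    have t3: "integrable P (\<lambda>\<omega>. (p t j \<omega> * X (Hn i t) \<omega>) * ww t j \<omega>) \<and>
        expectation (\<lambda>\<omega>. (p t j \<omega> * X (Hn i t) \<omega>) * ww t j \<omega>) =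
        expectation (\<lambda>\<omega>. p t j \<omega> * X (Hn i t) \<omega>) * expectation (ww t j)"
      using N3[OF j i, of t] I1[OF j]
      by (intro indep_mult[OF sets1b sets1a sets2 dep_mult[OF d_p[OF j] d_h[OF i]] d_w[OF j]]) auto
    note t4 = HH[OF i j, of t]
    have e: "(\<lambda>\<omega>. Phi t i \<omega> * Phi t j \<omega>) = (\<lambda>\<omega>. (p t i \<omega> * p t j \<omega>) * (ww t i \<omega> * ww t j \<omega>) +
       (\<alpha> * ((p t i \<omega> * X (Hn j t) \<omega>) * ww t i \<omega>) + (\<alpha> * ((p t j \<omega> * X (Hn i t) \<omega>) * ww t j \<omega>) +
        \<alpha>\<^sup>2 * (X (Hn i t) \<omega> * X (Hn j t) \<omega>))))"
      by (rule ext) (simp add: Phi_def power2_eq_square algebra_simps)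
    show "integrable P (\<lambda>\<omega>. Phi t i \<omega> * Phi t j \<omega>)" unfolding e using t1 t2 t3 t4 by simp
    show "expectation (\<lambda>\<omega>. Phi t i \<omega> * Phi t j \<omega>) =
        ((1 - \<alpha> * c)\<^sup>2 + \<alpha>\<^sup>2 * (if i = j then \<beta>\<^sup>2 else 0)) * (if i = j then A else B) + \<alpha>\<^sup>2 * (if i = j then \<sigma>\<^sup>2 else 0)"
      unfolding e using t1 t2 t3 t4 N2[OF i j, of t] N3[OF i j, of t] N3[OF j i, of t] I2[OF i j] by simp
  qed
  have s3: "past M t \<union> noise M t \<subseteq> Ind M" by (rule sets1f)
  have dm: "dep P X (past M t \<union> noise M t) (mean t)" by (rule dep_mono[OF _ d_mean]) auto
  have dm2: "dep P X (past M t \<union> noise M t) (\<lambda>\<omega>. mean t \<omega> * mean t \<omega>)" by (rule dep_mult[OF dm dm])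
  have c1: "integrable P (\<lambda>\<omega>. Cf t \<omega> * mean t \<omega>) \<and>
      expectation (\<lambda>\<omega>. Cf t \<omega> * mean t \<omega>) = expectation (Cf t) * expectation (mean t)"
    using Cf_int[of t] mI by (intro indep_mult[OF sets1d s3 sets1e d_Cf dm]) auto
  have c3: "integrable P (\<lambda>\<omega>. Cf t \<omega> * (mean t \<omega> * mean t \<omega>)) \<and>
      expectation (\<lambda>\<omega>. Cf t \<omega> * (mean t \<omega> * mean t \<omega>)) = expectation (Cf t) * expectation (\<lambda>\<omega>. mean t \<omega> * mean t \<omega>)"
    using Cf_int[of t] m2I by (intro indep_mult[OF sets1d s3 sets1e d_Cf dm2]) auto
  have c2: "integrable P (\<lambda>\<omega>. (1 - Cf t \<omega>) * Phi t i \<omega>) \<and>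
      expectation (\<lambda>\<omega>. (1 - Cf t \<omega>) * Phi t i \<omega>) = expectation (\<lambda>\<omega>. 1 - Cf t \<omega>) * expectation (Phi t i)"
    if i: "i < M" for i
    using Nf_int[of t] PhiI[OF i] by (intro indep_mult[OF sets1d s3 sets1e d_Nf d_Phi[OF i]]) auto
  have c4: "integrable P (\<lambda>\<omega>. (1 - Cf t \<omega>) * (Phi t i \<omega> * Phi t j \<omega>)) \<and>
      expectation (\<lambda>\<omega>. (1 - Cf t \<omega>) * (Phi t i \<omega> * Phi t j \<omega>)) =
        expectation (\<lambda>\<omega>. 1 - Cf t \<omega>) * expectation (\<lambda>\<omega>. Phi t i \<omega> * Phi t j \<omega>)"
    if i: "i < M" and j: "j < M" for i j
    using Nf_int[of t] PPI[OF i j] by (intro indep_mult[OF sets1d s3 sets1e d_Nf dep_mult[OF d_Phi[OF i] d_Phi[OF j]]]) auto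
  have R1: "integrable P (ww (Suc t) i) \<and> expectation (ww (Suc t) i) = mm (Suc t)" if i: "i < M" for i
  proof -
    have e: "ww (Suc t) i = (\<lambda>\<omega>. Cf t \<omega> * mean t \<omega> + (1 - Cf t \<omega>) * Phi t i \<omega>)"
      by (rule ext) (rule step1)
    have "expectation (ww (Suc t) i) = \<zeta> * mm t + (1 - \<zeta>) * ((1 - \<alpha> * c) * mm t)"
      unfolding e using c1 c2[OF i] Cf_int[of t] Nf_int[of t] mE PhiI[OF i] by simp
    also have "\<dots> = mm (Suc t)" by (simp add: mm_def rho_def algebra_simps)
    finally show ?thesis unfolding e using c1 c2[OF i] by simp
  qed
  have R2: "integrable P (\<lambda>\<omega>. ww (Suc t) i \<omega> * ww (Suc t) j \<omega>) \<and>
     expectation (\<lambda>\<omega>. ww (Suc t) i \<omega> * ww (Suc t) j \<omega>) =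
       (if i = j then fst (ABs M \<zeta> \<alpha> c \<beta> \<sigma> w0 (Suc t)) else snd (ABs M \<zeta> \<alpha> c \<beta> \<sigma> w0 (Suc t)))"
    if i: "i < M" and j: "j < M" for i j
  proof -
    have e: "(\<lambda>\<omega>. ww (Suc t) i \<omega> * ww (Suc t) j \<omega>) =
        (\<lambda>\<omega>. Cf t \<omega> * (mean t \<omega> * mean t \<omega>) + (1 - Cf t \<omega>) * (Phi t i \<omega> * Phi t j \<omega>))"
      by (rule ext) (rule step2)
    have "expectation (\<lambda>\<omega>. ww (Suc t) i \<omega> * ww (Suc t) j \<omega>) = \<zeta> * S + (1 - \<zeta>) *
        (((1 - \<alpha> * c)\<^sup>2 + \<alpha>\<^sup>2 * (if i = j then \<beta>\<^sup>2 else 0)) * (if i = j then A else B) + \<alpha>\<^sup>2 * (if i = j then \<sigma>\<^sup>2 else 0))"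
      unfolding e using c3 c4[OF i j] Cf_int[of t] Nf_int[of t] m2E PPI[OF i j] by simp
    also have "\<dots> = (if i = j then fst (ABs M \<zeta> \<alpha> c \<beta> \<sigma> w0 (Suc t)) else snd (ABs M \<zeta> \<alpha> c \<beta> \<sigma> w0 (Suc t)))"
      by (simp add: A_def B_def S_def Let_def algebra_simps)
    finally show ?thesis unfolding e using c3 c4[OF i j] by simp
  qed
  show ?case using R1 R2 by blast
qed

end

lemma lin2:
  fixes A B :: "nat \<Rightarrow> real"
  assumes T: "T11 \<ge> 0" "T12 \<ge> 0" "T21 \<ge> 0" "T22 \<ge> 0" and e: "1 - T22 > 0"
    and det: "(1 - T11) * (1 - T22) - T12 * T21 > 0"
    and rA: "\<And>t. A (Suc t) = T11 * A t + T12 * B t + c1"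
    and rB: "\<And>t. B (Suc t) = T21 * A t + T22 * B t + c2"
  shows "A \<longlonglongrightarrow> ((1 - T22) * c1 + T12 * c2) / ((1 - T11) * (1 - T22) - T12 * T21)"
    and "B \<longlonglongrightarrow> (T21 * c1 + (1 - T11) * c2) / ((1 - T11) * (1 - T22) - T12 * T21)"
proof -
  define D where "D = (1 - T11) * (1 - T22) - T12 * T21"
  define As where "As = ((1 - T22) * c1 + T12 * c2) / D"
  define Bs where "Bs = (T21 * c1 + (1 - T11) * c2) / D"
  have D: "D > 0" using det by (simp add: D_def)
  have a: "1 - T11 > 0"
  proof (rule ccontr)
    assume "\<not> 1 - T11 > 0"
    then have "(1 - T11) * (1 - T22) \<le> 0" using e by (simp add: mult_nonpos_nonneg)
    moreover have "T12 * T21 \<ge> 0" using T by simp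
    ultimately show False using det by linarith
  qed
  define XX where "XX = (1 - T22) * c1 + T12 * c2"
  define YY where "YY = T21 * c1 + (1 - T11) * c2"
  have k1: "(1 - T11) * XX - T12 * YY = c1 * D" by (simp add: XX_def YY_def D_def algebra_simps)
  have k2: "(1 - T22) * YY - T21 * XX = c2 * D" by (simp add: XX_def YY_def D_def algebra_simps)
  have "(1 - T11) * As - T12 * Bs = ((1 - T11) * XX - T12 * YY) / D"
    using D unfolding As_def Bs_def XX_def[symmetric] YY_def[symmetric] by (simp add: field_simps)
  also have "\<dots> = c1" using D k1 by simp
  finally have fixA: "As = T11 * As + T12 * Bs + c1" by (simp add: algebra_simps)
  have "(1 - T22) * Bs - T21 * As = ((1 - T22) * YY - T21 * XX) / D"
    using D unfolding As_def Bs_def XX_def[symmetric] YY_def[symmetric] by (simp add: field_simps)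
  also have "\<dots> = c2" using D k2 by simp
  finally have fixB: "Bs = T21 * As + T22 * Bs + c2" by (simp add: algebra_simps)
  define e1 where "e1 t = A t - As" for t
  define e2 where "e2 t = B t - Bs" for t
  have r1: "e1 (Suc t) = T11 * e1 t + T12 * e2 t" for t
    unfolding e1_def e2_def rA using fixA by (simp add: algebra_simps)
  have r2: "e2 (Suc t) = T21 * e1 t + T22 * e2 t" for t
    unfolding e1_def e2_def rB using fixB by (simp add: algebra_simps)
  define y1 where "y1 = 1 - T22 + T21"
  define y2 where "y2 = T12 + (1 - T11)"
  have y: "y1 \<ge> 0" "y2 \<ge> 0" using T e a by (simp_all add: y1_def y2_def)
  define V where "V t = y1 * \<bar>e1 t\<bar> + y2 * \<bar>e2 t\<bar>" for t
  have step: "V (Suc t) \<le> V t - D * (\<bar>e1 t\<bar> + \<bar>e2 t\<bar>)" for t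
  proof -
    have b1: "\<bar>e1 (Suc t)\<bar> \<le> T11 * \<bar>e1 t\<bar> + T12 * \<bar>e2 t\<bar>"
      unfolding r1 using T by (metis abs_mult abs_of_nonneg abs_triangle_ineq)
    have b2: "\<bar>e2 (Suc t)\<bar> \<le> T21 * \<bar>e1 t\<bar> + T22 * \<bar>e2 t\<bar>"
      unfolding r2 using T by (metis abs_mult abs_of_nonneg abs_triangle_ineq)
    have "V (Suc t) \<le> y1 * (T11 * \<bar>e1 t\<bar> + T12 * \<bar>e2 t\<bar>) + y2 * (T21 * \<bar>e1 t\<bar> + T22 * \<bar>e2 t\<bar>)"
      unfolding V_def using b1 b2 y by (intro add_mono mult_left_mono) auto
    also have "\<dots> = V t - D * (\<bar>e1 t\<bar> + \<bar>e2 t\<bar>)"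
      unfolding V_def D_def y1_def y2_def by (simp add: algebra_simps)
    finally show ?thesis .
  qed
  have V0: "V t \<ge> 0" for t unfolding V_def using y by simp
  have sumb: "D * (\<Sum>s<n. \<bar>e1 s\<bar> + \<bar>e2 s\<bar>) \<le> V 0 - V n" for n
  proof (induction n)
    case 0 then show ?case by simp
  next
    case (Suc n) then show ?case using step[of n] by (simp add: algebra_simps)
  qed
  have "summable (\<lambda>s. \<bar>e1 s\<bar> + \<bar>e2 s\<bar>)"
  proof (rule summableI_nonneg_bounded)
    fix n
    have "D * (\<Sum>s<n. \<bar>e1 s\<bar> + \<bar>e2 s\<bar>) \<le> V 0" using sumb[of n] V0[of n] by linarith
    then show "(\<Sum>s<n. \<bar>e1 s\<bar> + \<bar>e2 s\<bar>) \<le> V 0 / D" using D by (simp add: field_simps)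
  qed auto
  then have z: "(\<lambda>s. \<bar>e1 s\<bar> + \<bar>e2 s\<bar>) \<longlonglongrightarrow> 0" by (rule summable_LIMSEQ_zero)
  have "e1 \<longlonglongrightarrow> 0"
    by (rule tendsto_sandwich[of "\<lambda>s. - (\<bar>e1 s\<bar> + \<bar>e2 s\<bar>)" _ _ "\<lambda>s. \<bar>e1 s\<bar> + \<bar>e2 s\<bar>"])
       (use z tendsto_minus[OF z] in \<open>auto intro!: always_eventually\<close>)
  then have "(\<lambda>t. A t - As) \<longlonglongrightarrow> 0" unfolding e1_def .
  then show "A \<longlonglongrightarrow> ((1 - T22) * c1 + T12 * c2) / ((1 - T11) * (1 - T22) - T12 * T21)"
    unfolding As_def D_def by (rule LIM_zero_cancel)
  have "e2 \<longlonglongrightarrow> 0"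
    by (rule tendsto_sandwich[of "\<lambda>s. - (\<bar>e1 s\<bar> + \<bar>e2 s\<bar>)" _ _ "\<lambda>s. \<bar>e1 s\<bar> + \<bar>e2 s\<bar>"])
       (use z tendsto_minus[OF z] in \<open>auto intro!: always_eventually\<close>)
  then have "(\<lambda>t. B t - Bs) \<longlonglongrightarrow> 0" unfolding e2_def .
  then show "B \<longlonglongrightarrow> (T21 * c1 + (1 - T11) * c2) / ((1 - T11) * (1 - T22) - T12 * T21)"
    unfolding Bs_def D_def by (rule LIM_zero_cancel)
qed

context sgd begin

interpretation prob_space P by (rule ps)

lemma mean_stats: "integrable P (mean t) \<and> expectation (mean t) = mm t \<and>
  integrable P (\<lambda>\<omega>. mean t \<omega> * mean t \<omega>) \<and>
  expectation (\<lambda>\<omega>. mean t \<omega> * mean t \<omega>) =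
    (fst (ABs M \<zeta> \<alpha> c \<beta> \<sigma> w0 t) + (real M - 1) * snd (ABs M \<zeta> \<alpha> c \<beta> \<sigma> w0 t)) / real M"
proof -
  define A where "A = fst (ABs M \<zeta> \<alpha> c \<beta> \<sigma> w0 t)"
  define B where "B = snd (ABs M \<zeta> \<alpha> c \<beta> \<sigma> w0 t)"
  define S where "S = (A + (real M - 1) * B) / real M"
  have I1: "integrable P (ww t i)" "expectation (ww t i) = mm t" if "i < M" for i
    using moments[of t] that by auto
  have I2: "integrable P (\<lambda>\<omega>. ww t i \<omega> * ww t j \<omega>)"
     "expectation (\<lambda>\<omega>. ww t i \<omega> * ww t j \<omega>) = (if i = j then A else B)" if "i < M" "j < M" for i j
    using moments[of t] that unfolding A_def B_def by auto
  have Mp: "real M > 0" using Mpos by simp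
  have mI: "integrable P (mean t)" unfolding mean_eq
    by (intro integrable_divide_zero Bochner_Integration.integrable_sum) (auto intro: I1)
  have mE: "expectation (mean t) = mm t"
  proof -
    have "expectation (mean t) = (\<Sum>j<M. expectation (ww t j)) / real M"
      unfolding mean_eq by (simp add: Bochner_Integration.integral_sum I1)
    also have "\<dots> = mm t" using Mp by (simp add: I1)
    finally show ?thesis .
  qed
  have ss: "integrable P (\<lambda>x. \<Sum>i<M. \<Sum>j<M. ww t i x * ww t j x)"
    by (rule Bochner_Integration.integrable_sum, rule Bochner_Integration.integrable_sum, rule I2) auto
  have m2I: "integrable P (\<lambda>\<omega>. mean t \<omega> * mean t \<omega>)" unfolding mean2_eq
    using ss by simp
  have m2E: "expectation (\<lambda>\<omega>. mean t \<omega> * mean t \<omega>) = S"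
  proof -
    have inner: "expectation (\<lambda>\<omega>. \<Sum>j<M. ww t i \<omega> * ww t j \<omega>) = (\<Sum>j<M. expectation (\<lambda>\<omega>. ww t i \<omega> * ww t j \<omega>))"
      if "i < M" for i by (rule Bochner_Integration.integral_sum) (use I2 that in auto)
    have outer: "expectation (\<lambda>\<omega>. \<Sum>i<M. \<Sum>j<M. ww t i \<omega> * ww t j \<omega>) = (\<Sum>i<M. expectation (\<lambda>\<omega>. \<Sum>j<M. ww t i \<omega> * ww t j \<omega>))"
      by (rule Bochner_Integration.integral_sum) (rule Bochner_Integration.integrable_sum, auto intro: I2)
    have "expectation (\<lambda>\<omega>. mean t \<omega> * mean t \<omega>) =
        (\<Sum>i<M. \<Sum>j<M. expectation (\<lambda>\<omega>. ww t i \<omega> * ww t j \<omega>)) / (real M * real M)"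
      unfolding mean2_eq integral_divide_zero outer using inner by simp
    also have "\<dots> = (\<Sum>i<M. \<Sum>j<M. if i = j then A else B) / (real M * real M)"
      by (simp add: I2)
    also have "\<dots> = (\<Sum>i<M. A + (real M - 1) * B) / (real M * real M)"
      by (simp add: sum_if_AB)
    also have "\<dots> = S" using Mp by (simp add: S_def)
    finally show ?thesis .
  qed
  show ?thesis using mI mE m2I m2E unfolding S_def A_def B_def by blast
qed

lemma var_mean: "var P (\<lambda>\<omega>. (\<Sum>i<M. W M c \<alpha> w0 X \<omega> t i) / real M) =
    (fst (ABs M \<zeta> \<alpha> c \<beta> \<sigma> w0 t) + (real M - 1) * snd (ABs M \<zeta> \<alpha> c \<beta> \<sigma> w0 t)) / real M - (mm t)\<^sup>2"
proof -
  have e: "(\<lambda>\<omega>. (\<Sum>i<M. W M c \<alpha> w0 X \<omega> t i) / real M) = mean t"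
    by (rule ext) (simp add: mean_def ww_def)
  show ?thesis unfolding e using mean_stats[of t] var_alt[OF ps, of "mean t"] by simp
qed

end

lemma alg:
  fixes c \<alpha> \<zeta> \<beta> \<sigma> :: real and M :: nat
  assumes c: "c > 0" and a: "\<alpha> > 0" and z: "0 < \<zeta>" "\<zeta> < 1" and ac: "\<alpha> * c < 2"
    and dp: "denom M \<zeta> \<alpha> c \<beta> > 0" and M: "M \<ge> 1"
    and T11: "T11 = \<zeta> / real M + (1 - \<zeta>) * ((1 - \<alpha> * c)\<^sup>2 + \<alpha>\<^sup>2 * \<beta>\<^sup>2)"
    and T12: "T12 = \<zeta> * (real M - 1) / real M"
    and T21: "T21 = \<zeta> / real M"
    and T22: "T22 = \<zeta> * (real M - 1) / real M + (1 - \<zeta>) * (1 - \<alpha> * c)\<^sup>2"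
    and c1: "c1 = (1 - \<zeta>) * \<alpha>\<^sup>2 * \<sigma>\<^sup>2"
    and dt: "dt = (1 - T11) * (1 - T22) - T12 * T21"
  shows "1 - T22 > 0" "dt > 0"
    "(((1 - T22) * c1 + T12 * 0) / dt + (real M - 1) * ((T21 * c1 + (1 - T11) * 0) / dt)) / real M
       = \<alpha> * \<sigma>\<^sup>2 / real M * inverse (denom M \<zeta> \<alpha> c \<beta>)"
proof -
  define u where "u = 1 - \<zeta>"
  define \<delta> where "\<delta> = \<alpha> * (2 * c - \<alpha> * c\<^sup>2)"
  define k where "k = \<zeta> / real M"
  define q where "q = \<alpha>\<^sup>2 * \<beta>\<^sup>2"
  define Dn where "Dn = denom M \<zeta> \<alpha> c \<beta>"
  have Mp: "real M > 0" using M by simp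
  have u: "u > 0" using z by (simp add: u_def)
  have "2 * c - \<alpha> * c\<^sup>2 = c * (2 - \<alpha> * c)" by (simp add: power2_eq_square algebra_simps)
  then have cc: "2 * c - \<alpha> * c\<^sup>2 > 0" using c ac by simp
  have d: "\<delta> > 0" using a cc by (simp add: \<delta>_def)
  have ud: "u * \<delta> > 0" using u d by simp
  have r: "(1 - \<alpha> * c)\<^sup>2 = 1 - \<delta>" by (simp add: \<delta>_def power2_eq_square algebra_simps)
  have eta: "eta \<zeta> \<alpha> c = \<zeta> / (u * \<delta>)" by (simp add: eta_def u_def \<delta>_def mult.assoc)
  have h1: "(1 + eta \<zeta> \<alpha> c / real M) / (1 + eta \<zeta> \<alpha> c) = (u * \<delta> + k) / (u * \<delta> + \<zeta>)"
  proof -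
    define x where "x = u * \<delta>"
    have x: "x > 0" using ud by (simp add: x_def)
    have e1: "x + \<zeta> / real M = x * (1 + \<zeta> / x / real M)" using x by (simp add: field_simps)
    have e2: "x + \<zeta> = x * (1 + \<zeta> / x)" using x by (simp add: field_simps)
    have "(x + \<zeta> / real M) / (x + \<zeta>) = (1 + \<zeta> / x / real M) / (1 + \<zeta> / x)"
      unfolding e1 e2 using x by (rule mult_divide_mult_cancel_left[OF less_imp_neq[symmetric]])
    then have "(1 + \<zeta> / x / real M) / (1 + \<zeta> / x) = (x + \<zeta> / real M) / (x + \<zeta>)" by simp
    then show ?thesis unfolding eta k_def x_def by (simp add: divide_divide_eq_left)
  qed
  have h2: "\<alpha> * Dn = \<delta> - q * (u * \<delta> + k) / (u * \<delta> + \<zeta>)"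
  proof -
    have "\<alpha> * Dn = \<alpha> * (2 * c - \<alpha> * c\<^sup>2) - \<alpha> * (\<alpha> * \<beta>\<^sup>2 * ((1 + eta \<zeta> \<alpha> c / real M) / (1 + eta \<zeta> \<alpha> c)))"
      unfolding Dn_def denom_def by (simp add: algebra_simps)
    also have "\<dots> = \<delta> - q * (u * \<delta> + k) / (u * \<delta> + \<zeta>)"
      unfolding h1 by (simp add: \<delta>_def q_def power2_eq_square)
    finally show ?thesis .
  qed
  have pz: "u * \<delta> + \<zeta> > 0" using ud z by simp
  have N: "\<delta> * (u * \<delta> + \<zeta>) - q * (u * \<delta> + k) = \<alpha> * Dn * (u * \<delta> + \<zeta>)"
    unfolding h2 using pz by (simp add: field_simps)
  have e22: "1 - T22 = u * \<delta> + k"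
    unfolding T22 r using Mp by (simp add: k_def u_def field_simps)
  have e11: "1 - T11 = u * \<delta> + \<zeta> - k - u * q"
    unfolding T11 r using Mp by (simp add: k_def u_def q_def field_simps)
  have e12: "T12 = \<zeta> - k" unfolding T12 k_def using Mp by (simp add: field_simps)
  have e21: "T21 = k" unfolding T21 k_def ..
  have dtf: "dt = u * (\<delta> * (u * \<delta> + \<zeta>) - q * (u * \<delta> + k))"
    unfolding dt e22 e11 e12 e21 by (simp add: algebra_simps)
  have dtp: "dt = u * \<alpha> * Dn * (u * \<delta> + \<zeta>)" unfolding dtf N by simp
  have kp: "k \<ge> 0" using z Mp by (simp add: k_def)
  show "1 - T22 > 0" unfolding e22 using ud kp by simp
  have Dp: "Dn > 0" using dp by (simp add: Dn_def)
  show dtpos: "dt > 0" unfolding dtp using u a Dp pz by simp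
  have num: "(1 - T22) + (real M - 1) * T21 = u * \<delta> + \<zeta>"
    unfolding e22 e21 k_def using Mp by (simp add: field_simps)
  have "(((1 - T22) * c1 + T12 * 0) / dt + (real M - 1) * ((T21 * c1 + (1 - T11) * 0) / dt)) / real M
      = c1 * ((1 - T22) + (real M - 1) * T21) / (dt * real M)"
    using dtpos Mp by (simp add: field_simps)
  also have "\<dots> = c1 * (u * \<delta> + \<zeta>) / (u * \<alpha> * Dn * (u * \<delta> + \<zeta>) * real M)"
    unfolding num dtp ..
  also have "\<dots> = ((\<alpha> * \<sigma>\<^sup>2) * (u * \<alpha> * (u * \<delta> + \<zeta>))) / ((real M * Dn) * (u * \<alpha> * (u * \<delta> + \<zeta>)))"
    unfolding c1 u_def[symmetric] by (simp add: power2_eq_square algebra_simps)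
  also have "\<dots> = (\<alpha> * \<sigma>\<^sup>2) / (real M * Dn)"
    by (rule mult_divide_mult_cancel_right) (use u a pz in simp)
  also have "\<dots> = \<alpha> * \<sigma>\<^sup>2 / real M * inverse Dn"
    by (simp add: divide_inverse mult.assoc)
  finally show "(((1 - T22) * c1 + T12 * 0) / dt + (real M - 1) * ((T21 * c1 + (1 - T11) * 0) / dt)) / real M
       = \<alpha> * \<sigma>\<^sup>2 / real M * inverse (denom M \<zeta> \<alpha> c \<beta>)" by (simp add: Dn_def)
qed

context sgd begin

lemma final:
  assumes c: "c > 0" and a: "\<alpha> > 0" and z: "0 < \<zeta>" "\<zeta> < 1" and ac: "\<alpha> * c < 2"
    and dp: "denom M \<zeta> \<alpha> c \<beta> > 0"
  shows "(\<lambda>t. var P (\<lambda>\<omega>. (\<Sum>i<M. W M c \<alpha> w0 X \<omega> t i) / real M))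
           \<longlonglongrightarrow> \<alpha> * \<sigma>\<^sup>2 / real M * inverse (denom M \<zeta> \<alpha> c \<beta>)"
proof -
  define T11 where "T11 = \<zeta> / real M + (1 - \<zeta>) * ((1 - \<alpha> * c)\<^sup>2 + \<alpha>\<^sup>2 * \<beta>\<^sup>2)"
  define T12 where "T12 = \<zeta> * (real M - 1) / real M"
  define T21 where "T21 = \<zeta> / real M"
  define T22 where "T22 = \<zeta> * (real M - 1) / real M + (1 - \<zeta>) * (1 - \<alpha> * c)\<^sup>2"
  define c1 where "c1 = (1 - \<zeta>) * \<alpha>\<^sup>2 * \<sigma>\<^sup>2"
  define dt where "dt = (1 - T11) * (1 - T22) - T12 * T21"
  note al = alg[OF c a z ac dp Mpos T11_def T12_def T21_def T22_def c1_def dt_def]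
  have Mp: "real M > 0" using Mpos by simp
  define Af where "Af t = fst (ABs M \<zeta> \<alpha> c \<beta> \<sigma> w0 t)" for t
  define Bf where "Bf t = snd (ABs M \<zeta> \<alpha> c \<beta> \<sigma> w0 t)" for t
  have rA: "Af (Suc t) = T11 * Af t + T12 * Bf t + c1" for t
    unfolding Af_def Bf_def T11_def T12_def c1_def using Mp by (simp add: Let_def field_simps)
  have rB: "Bf (Suc t) = T21 * Af t + T22 * Bf t + 0" for t
    unfolding Af_def Bf_def T21_def T22_def using Mp by (simp add: Let_def field_simps)
  have T: "T11 \<ge> 0" "T12 \<ge> 0" "T21 \<ge> 0" "T22 \<ge> 0"
    unfolding T11_def T12_def T21_def T22_def using z Mp Mpos by auto
  have LA: "Af \<longlonglongrightarrow> ((1 - T22) * c1 + T12 * 0) / dt"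
    using lin2(1)[where A=Af and B=Bf, OF T al(1) al(2)[unfolded dt_def] rA rB] unfolding dt_def .
  have LB: "Bf \<longlonglongrightarrow> (T21 * c1 + (1 - T11) * 0) / dt"
    using lin2(2)[where A=Af and B=Bf, OF T al(1) al(2)[unfolded dt_def] rA rB] unfolding dt_def .
  have LS: "(\<lambda>t. (Af t + (real M - 1) * Bf t) / real M) \<longlonglongrightarrow>
      (((1 - T22) * c1 + T12 * 0) / dt + (real M - 1) * ((T21 * c1 + (1 - T11) * 0) / dt)) / real M"
    using Mp by (intro tendsto_intros LA LB) auto
  have rho: "\<bar>rho\<bar> < 1"
  proof -
    have acp: "\<alpha> * c > 0" using a c by simp
    have h1: "(1 - \<zeta>) * (1 - \<alpha> * c) < (1 - \<zeta>) * 1"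
      by (rule mult_strict_left_mono) (use acp z in auto)
    have h2: "(1 - \<zeta>) * (-1) < (1 - \<zeta>) * (1 - \<alpha> * c)"
      by (rule mult_strict_left_mono) (use ac z in auto)
    define y where "y = (1 - \<zeta>) * (1 - \<alpha> * c)"
    have g1: "y < 1 - \<zeta>" using h1 unfolding y_def by simp
    have g2: "-(1 - \<zeta>) < y" using h2 unfolding y_def by simp
    have "\<zeta> + y < 1" "- (\<zeta> + y) < 1" using g1 g2 z by linarith+
    then show ?thesis unfolding rho_def abs_less_iff y_def[symmetric] by simp
  qed
  have "(\<lambda>t. rho ^ t) \<longlonglongrightarrow> 0" by (rule LIMSEQ_power_zero) (use rho in simp)
  then have "(\<lambda>t. rho ^ t * w0) \<longlonglongrightarrow> 0" by (rule tendsto_mult_left_zero[where f="\<lambda>t. rho ^ t"])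
  then have Lm: "mm \<longlonglongrightarrow> 0" unfolding mm_def[abs_def] .
  have "(\<lambda>t. (Af t + (real M - 1) * Bf t) / real M - (mm t)\<^sup>2) \<longlonglongrightarrow>
      (((1 - T22) * c1 + T12 * 0) / dt + (real M - 1) * ((T21 * c1 + (1 - T11) * 0) / dt)) / real M - 0\<^sup>2"
    by (intro tendsto_intros LS Lm)
  then show ?thesis unfolding var_mean Af_def Bf_def al(3) by simp
qed

end

theorem lemma1:
  fixes P :: "'a measure" and X :: "src \<Rightarrow> 'a \<Rightarrow> real"
    and c \<alpha> \<zeta> \<beta> \<sigma> w0 :: real and M :: nat
  assumes "prob_space P"
    and "c > 0" and "\<alpha> > 0" and "0 < \<zeta>" and "\<zeta> < 1" and "M \<ge> 1"
    and indep: "prob_space.indep_vars P (\<lambda>_. borel) X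
            ({Coin t | t. True} \<union> {Bn i t | i t. i < M} \<union> {Hn i t | i t. i < M})"
    and coin: "\<And>t. measure P {\<omega> \<in> space P. X (Coin t) \<omega> = 1} = \<zeta>"
    and b: "\<And>i t. i < M \<Longrightarrow> integrable P (X (Bn i t)) \<and> integrable P (\<lambda>\<omega>. (X (Bn i t) \<omega>)\<^sup>2)
              \<and> integral\<^sup>L P (X (Bn i t)) = 0 \<and> var P (X (Bn i t)) = \<beta>\<^sup>2"
    and h: "\<And>i t. i < M \<Longrightarrow> integrable P (X (Hn i t)) \<and> integrable P (\<lambda>\<omega>. (X (Hn i t) \<omega>)\<^sup>2)
              \<and> integral\<^sup>L P (X (Hn i t)) = 0 \<and> var P (X (Hn i t)) = \<sigma>\<^sup>2"
    and stable1: "\<alpha> * c < 2"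
    and stable2: "denom M \<zeta> \<alpha> c \<beta> > 0"
  shows "(\<lambda>t. var P (\<lambda>\<omega>. (\<Sum>i<M. W M c \<alpha> w0 X \<omega> t i) / real M))
           \<longlonglongrightarrow> \<alpha> * \<sigma>\<^sup>2 / real M * inverse (denom M \<zeta> \<alpha> c \<beta>)"
proof -
  have S: "sgd P X \<zeta> \<beta> \<sigma> M"
    by (rule sgd.intro[OF assms(1) assms(6) indep[folded Ind_def] coin b h])
  show ?thesis by (rule sgd.final[OF S assms(2-5) stable1 stable2])
qed

end
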